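(* As formal power series in $q$ with coefficients in $\mathbb{Z}[x]$, $$\sum_{\lambda\in \mathcal{SC}}x^{n_1(\lambda)}q^{|\lambda|} =1+x \sum_{n\geq 1}\frac{q^{n^2}\, \big(1-(1-x)q^{2n}\big)\, \big((1-x^2)q^2;q^2\big)_{n-1}}{(q^2;q^2)_{n}}.$$
   Context: A partition is self-conjugate if its Young diagram is symmetric about the main diagonal; $\mathcal{SC}$ is the set of all self-conjugate partitions (including the empty partition of size $0$), and $|\lambda|$ is the size. The hook length of the cell $(i,j)$ is the number of cells to its right in row $i$ plus the number below it in column $j$ plus $1$; $n_1(\lambda)$ is the number of cells of $\lambda$ with hook length $1$. $(a;q)_0=1$, $(a;q)_n=\prod_{j=0}^{n-1}(1-aq^j)$. *)

theory Defs
  imports "HOL-Computational_Algebra.Formal_Power_Series" "HOL-Computational_Algebra.Polynomial"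
begin

definition is_partition :: "nat list \<Rightarrow> bool" where
  "is_partition la \<longleftrightarrow> sorted_wrt (\<ge>) la \<and> (\<forall>p\<in>set la. 0 < p)"

definition conj_part :: "nat list \<Rightarrow> nat list" where
  "conj_part la = map (\<lambda>j. length (filter (\<lambda>p. j < p) la)) [0..<(if la = [] then 0 else hd la)]"

definition self_conjugate :: "nat list \<Rightarrow> bool" where
  "self_conjugate la \<longleftrightarrow> is_partition la \<and> conj_part la = la"

definition SC :: "nat list set" where
  "SC = {la. self_conjugate la}"

definition psize :: "nat list \<Rightarrow> nat" where
  "psize la = sum_list la"

definition cells :: "nat list \<Rightarrow> (nat \<times> nat) set" where
  "cells la = {(i, j). i < length la \<and> j < la ! i}"

text \<open>Hook length: arm (cells to the right) + leg (cells below) + 1.\<close>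
definition hook :: "nat list \<Rightarrow> nat \<times> nat \<Rightarrow> nat" where
  "hook la c = (case c of (i, j) \<Rightarrow> (la ! i - Suc j) + (conj_part la ! j - Suc i) + 1)"

definition n1 :: "nat list \<Rightarrow> nat" where
  "n1 la = card {c \<in> cells la. hook la c = 1}"

definition qpoch :: "'a::comm_ring_1 \<Rightarrow> 'a \<Rightarrow> nat \<Rightarrow> 'a" where
  "qpoch a b n = (\<Prod>j<n. 1 - a * b ^ j)"

abbreviation px :: "int poly" where
  "px \<equiv> [:0, 1:]"

text \<open>Division by a power series with constant term 1 (a unit): multiply by its inverse.\<close>
definition fps_div1 :: "'a::comm_ring_1 fps \<Rightarrow> 'a fps \<Rightarrow> 'a fps" where
  "fps_div1 N D = N * fps_left_inverse D 1"

definition SC_gf :: "int poly fps" where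
  "SC_gf = Abs_fps (\<lambda>m. \<Sum>la\<in>{la\<in>SC. psize la = m}. monom 1 (n1 la))"

definition rhs_term :: "nat \<Rightarrow> int poly fps" where
  "rhs_term n = fps_div1
     (fps_X ^ (n\<^sup>2) * (1 - fps_const (1 - px) * fps_X ^ (2 * n))
        * qpoch (fps_const (1 - px\<^sup>2) * fps_X\<^sup>2) (fps_X\<^sup>2) (n - 1))
     (qpoch (fps_X\<^sup>2) (fps_X\<^sup>2) n)"

end

theory Submission
  imports Defs
begin


definition cnt :: "nat list \<Rightarrow> nat \<Rightarrow> nat" where
  "cnt la j = length (filter (\<lambda>p. j < p) la)"
definition pp :: "nat list \<Rightarrow> nat \<Rightarrow> nat" where
  "pp la i = (if i < length la then la ! i else 0)"

lemma conj_part_eq: "conj_part la = map (cnt la) [0..<pp la 0]"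
  by (cases la) (auto simp: conj_part_def cnt_def pp_def)

lemma cnt_Cons: "cnt (a#xs) j = (if j < a then Suc (cnt xs j) else cnt xs j)"
  by (simp add: cnt_def)
lemma pp_Cons0[simp]: "pp (a#xs) 0 = a" by (simp add: pp_def)
lemma pp_ConsS[simp]: "pp (a#xs) (Suc i) = pp xs i" by (simp add: pp_def)
lemma pp_Nil[simp]: "pp [] i = 0" by (simp add: pp_def)

lemma is_partition_Cons: "is_partition (a#xs) \<longleftrightarrow> 0 < a \<and> (\<forall>p\<in>set xs. p \<le> a) \<and> is_partition xs"
  by (auto simp: is_partition_def)

lemma pp_le_hd: "\<forall>p\<in>set xs. p \<le> a \<Longrightarrow> pp xs k \<le> a"
  by (auto simp: pp_def)

lemma cnt_zero_if: "\<forall>p\<in>set xs. p \<le> j \<Longrightarrow> cnt xs j = 0"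
  by (auto simp: cnt_def filter_empty_conv)

lemma galois: "is_partition la \<Longrightarrow> (i < cnt la j) = (j < pp la i)"
proof (induction la arbitrary: i)
  case Nil thus ?case by (simp add: cnt_def)
next
  case (Cons a xs)
  hence a: "0 < a" "\<forall>p\<in>set xs. p \<le> a" "is_partition xs" by (auto simp: is_partition_Cons)
  show ?case
  proof (cases "j < a")
    case True thus ?thesis using Cons.IH[OF a(3)] by (cases i) (auto simp: cnt_Cons)
  next
    case False
    hence "cnt xs j = 0" using a(2) by (intro cnt_zero_if) auto
    moreover have "\<not> j < pp xs k" for k using pp_le_hd[OF a(2), of k] False by simp
    ultimately show ?thesis using False by (cases i) (auto simp: cnt_Cons)
  qed
qed

lemma eq_from_less: "(\<And>k::nat. k < a \<longleftrightarrow> k < b) \<Longrightarrow> a = b"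
  by (metis less_irrefl nat_neq_iff)

lemma pp_mono: "is_partition la \<Longrightarrow> i \<le> i' \<Longrightarrow> pp la i' \<le> pp la i"
  unfolding is_partition_def pp_def
  by (auto simp: sorted_wrt_iff_nth_less le_less)

lemma pp_pos: "is_partition la \<Longrightarrow> (0 < pp la i) = (i < length la)"
  by (auto simp: is_partition_def pp_def)

lemma cnt_le_len: "cnt la j \<le> length la" by (simp add: cnt_def)

lemma cnt0: "is_partition la \<Longrightarrow> cnt la 0 = length la"
  by (simp add: cnt_def is_partition_def filter_id_conv)

lemma cnt_conj: "is_partition la \<Longrightarrow> cnt (conj_part la) j = pp la j"
proof -
  assume P: "is_partition la"
  have "cnt (conj_part la) j = card {k. k < pp la 0 \<and> j < map (cnt la) [0..<pp la 0] ! k}"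
    by (simp add: conj_part_eq cnt_def[of "map (cnt la) [0..<pp la 0]"] length_filter_conv_card)
  also have "{k. k < pp la 0 \<and> j < map (cnt la) [0..<pp la 0] ! k} = {k. k < pp la 0 \<and> j < cnt la k}"
    by auto
  also have "{k. k < pp la 0 \<and> j < cnt la k} = {..<pp la j}"
    using pp_mono[OF P, of 0 j] by (auto simp: galois[OF P])
  finally show ?thesis by simp
qed

lemma pp_conj: "is_partition la \<Longrightarrow> pp (conj_part la) k = cnt la k"
proof -
  assume P: "is_partition la"
  show ?thesis
  proof (cases "k < pp la 0")
    case True thus ?thesis by (simp add: conj_part_eq pp_def)
  next
    case False
    hence "\<not> 0 < cnt la k" using galois[OF P, of 0 k] by simp
    thus ?thesis using False by (simp add: conj_part_eq pp_def)
  qed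
qed

lemma cnt_anti: "j \<le> j' \<Longrightarrow> cnt la j' \<le> cnt la j"
  by (induction la) (auto simp: cnt_Cons cnt_def)

lemma is_partition_conj: "is_partition la \<Longrightarrow> is_partition (conj_part la)"
proof -
  assume P: "is_partition la"
  have pos: "k < pp la 0 \<Longrightarrow> 0 < cnt la k" for k using galois[OF P, of 0 k] by simp
  show ?thesis unfolding conj_part_eq is_partition_def
    by (auto simp: sorted_wrt_iff_nth_less cnt_anti pos)
qed

lemma part_eq: "is_partition a \<Longrightarrow> is_partition b \<Longrightarrow> (\<And>i. pp a i = pp b i) \<Longrightarrow> a = b"
proof -
  assume A: "is_partition a" and B: "is_partition b" and E: "\<And>i. pp a i = pp b i"
  have L: "length a = length b"
    by (rule eq_from_less) (metis pp_pos A B E)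
  show ?thesis
  proof (rule nth_equalityI[OF L])
    fix i assume "i < length a" thus "a ! i = b ! i" using E[of i] L by (simp add: pp_def)
  qed
qed

lemma sc_iff: "is_partition la \<Longrightarrow> conj_part la = la \<longleftrightarrow> (\<forall>j. cnt la j = pp la j)"
  by (metis part_eq is_partition_conj pp_conj)



definition Dset :: "nat list \<Rightarrow> nat set" where
  "Dset la = {i. i < length la \<and> pp la (Suc i) < la ! i}"

lemma nth_anti: "is_partition la \<Longrightarrow> i \<le> k \<Longrightarrow> k < length la \<Longrightarrow> la ! k \<le> la ! i"
  using pp_mono[of la i k] by (simp add: pp_def)

lemma card_set_D: assumes P: "is_partition la" shows "card (set la) = card (Dset la)"
proof -
  have "bij_betw (\<lambda>i. la ! i) (Dset la) (set la)"
  proof (rule bij_betw_imageI)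
    show "inj_on (\<lambda>i. la ! i) (Dset la)"
    proof (rule inj_onI)
      fix i i' assume A: "i \<in> Dset la" "i' \<in> Dset la" "la ! i = la ! i'"
      show "i = i'"
      proof (rule ccontr)
        assume "i \<noteq> i'"
        then consider "i < i'" | "i' < i" by linarith
        thus False
        proof cases
          case 1
          hence "la ! i' \<le> la ! Suc i" using A nth_anti[OF P, of "Suc i" i'] by (auto simp: Dset_def)
          thus False using A 1 by (auto simp: Dset_def pp_def split: if_splits)
        next
          case 2
          hence "la ! i \<le> la ! Suc i'" using A nth_anti[OF P, of "Suc i'" i] by (auto simp: Dset_def)
          thus False using A 2 by (auto simp: Dset_def pp_def split: if_splits)
        qed
      qed
    qed
    show "(\<lambda>i. la ! i) ` Dset la = set la"
    proof
      show "(\<lambda>i. la ! i) ` Dset la \<subseteq> set la" by (auto simp: Dset_def)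
      show "set la \<subseteq> (\<lambda>i. la ! i) ` Dset la"
      proof
        fix v assume "v \<in> set la"
        then obtain k where k: "k < length la" "la ! k = v" by (auto simp: in_set_conv_nth)
        have v0: "0 < v" using P k by (auto simp: is_partition_def)
        define i where "i = cnt la (v - 1) - 1"
        have "k < cnt la (v - 1)" using galois[OF P] k v0 by (simp add: pp_def)
        hence ki: "k \<le> i" and ic: "i < cnt la (v - 1)" by (auto simp: i_def)
        hence "v - 1 < pp la i" using galois[OF P] by simp
        hence il: "i < length la" and "v - 1 < la ! i" by (auto simp: pp_def split: if_splits)
        moreover have "la ! i \<le> v" using nth_anti[OF P ki il] k by simp
        ultimately have e: "la ! i = v" by linarith
        have "\<not> Suc i < cnt la (v - 1)" using ic by (simp add: i_def)
        hence "pp la (Suc i) \<le> v - 1" using galois[OF P, of "Suc i" "v - 1"] by simp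
        hence "i \<in> Dset la" using il e v0 by (simp add: Dset_def)
        thus "v \<in> (\<lambda>i. la ! i) ` Dset la" using e by blast
      qed
    qed
  qed
  thus ?thesis by (simp add: bij_betw_same_card)
qed

lemma n1_eq: assumes P: "is_partition la" shows "n1 la = card (Dset la)"
proof -
  have E: "{c \<in> cells la. hook la c = 1} = (\<lambda>i. (i, la ! i - 1)) ` Dset la"
  proof (intro set_eqI iffI)
    fix c assume c: "c \<in> {c \<in> cells la. hook la c = 1}"
    obtain i j where cij: "c = (i, j)" by fastforce
    have ij: "i < length la" "j < la ! i" using c cij by (auto simp: cells_def)
    have "la ! i \<le> la ! 0" using nth_anti[OF P, of 0 i] ij by simp
    hence j0: "j < pp la 0" using ij by (cases la) (auto simp: pp_def)
    have cj: "conj_part la ! j = cnt la j" using j0 by (simp add: conj_part_eq)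
    have h: "la ! i - Suc j = 0" "cnt la j - Suc i = 0" using c cij cj by (auto simp: hook_def)
    have jv: "j = la ! i - 1" using h ij by linarith
    have "i < cnt la j" using galois[OF P] ij by (simp add: pp_def)
    hence "\<not> Suc i < cnt la j" using h by linarith
    hence "pp la (Suc i) \<le> j" using galois[OF P, of "Suc i" j] by simp
    hence "i \<in> Dset la" using ij jv by (simp add: Dset_def)
    thus "c \<in> (\<lambda>i. (i, la ! i - 1)) ` Dset la" using cij jv by blast
  next
    fix c assume "c \<in> (\<lambda>i. (i, la ! i - 1)) ` Dset la"
    then obtain i where i: "i \<in> Dset la" "c = (i, la ! i - 1)" by blast
    have il: "i < length la" and d: "pp la (Suc i) < la ! i" using i by (auto simp: Dset_def)
    have pos: "0 < la ! i" using P il by (auto simp: is_partition_def)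
    define j where "j = la ! i - 1"
    have ij: "j < la ! i" using pos by (simp add: j_def)
    have "la ! i \<le> la ! 0" using nth_anti[OF P, of 0 i] il by simp
    hence j0: "j < pp la 0" using ij il by (cases la) (auto simp: pp_def)
    have cj: "conj_part la ! j = cnt la j" using j0 by (simp add: conj_part_eq)
    have "i < cnt la j" using galois[OF P] ij il by (simp add: pp_def)
    moreover have "\<not> Suc i < cnt la j" using galois[OF P, of "Suc i" j] d by (simp add: j_def)
    ultimately have "cnt la j = Suc i" by linarith
    hence "hook la (i, j) = 1" using cj by (simp add: hook_def j_def)
    moreover have "(i, j) \<in> cells la" using il ij by (simp add: cells_def)
    ultimately show "c \<in> {c \<in> cells la. hook la c = 1}" using i by (simp add: j_def)
  qed
  have "inj_on (\<lambda>i. (i, la ! i - 1)) (Dset la)" by (rule inj_onI) auto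
  thus ?thesis unfolding n1_def E by (simp add: card_image)
qed

lemma n1_card_set: "is_partition la \<Longrightarrow> n1 la = card (set la)"
  using n1_eq card_set_D by simp



definition build :: "nat \<Rightarrow> nat list \<Rightarrow> nat list" where
  "build n mu = map (\<lambda>i. n + pp mu i) [0..<n] @ conj_part mu"

lemma len_conj: "length (conj_part mu) = pp mu 0" by (simp add: conj_part_eq)

lemma pp_append: "pp (A @ B) i = (if i < length A then A ! i else pp B (i - length A))"
  by (auto simp: pp_def nth_append)

lemma cnt_append: "cnt (A @ B) j = cnt A j + cnt B j" by (simp add: cnt_def)

lemma pp_build: assumes P: "is_partition mu"
  shows "pp (build n mu) i = (if i < n then n + pp mu i else cnt mu (i - n))"
  by (simp add: build_def pp_append pp_conj[OF P])

lemma cnt_le_n: "length mu \<le> n \<Longrightarrow> cnt mu j \<le> n" using cnt_le_len[of mu j] by linarith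

lemma is_partition_build: assumes P: "is_partition mu" and L: "length mu \<le> n"
  shows "is_partition (build n mu)"
proof -
  have C: "is_partition (conj_part mu)" by (rule is_partition_conj[OF P])
  have s1: "sorted_wrt (\<ge>) (map (\<lambda>i. n + pp mu i) [0..<n])"
    by (auto simp: sorted_wrt_iff_nth_less pp_mono[OF P])
  have s2: "sorted_wrt (\<ge>) (conj_part mu)" using C by (simp add: is_partition_def)
  have s3: "\<forall>a\<in>set (map (\<lambda>i. n + pp mu i) [0..<n]). \<forall>b\<in>set (conj_part mu). b \<le> a"
    using cnt_le_n[OF L] by (auto simp: conj_part_eq intro: trans_le_add1)
  have p2: "\<forall>p\<in>set (conj_part mu). 0 < p" using C by (simp add: is_partition_def)
  have p1: "\<forall>p\<in>set (map (\<lambda>i. n + pp mu i) [0..<n]). 0 < p" by auto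
  show ?thesis unfolding is_partition_def build_def
    using s1 s2 s3 p1 p2 by (auto simp: sorted_wrt_append)
qed

lemma cnt_build: assumes P: "is_partition mu" and L: "length mu \<le> n"
  shows "cnt (build n mu) j = pp (build n mu) j"
proof -
  have A: "cnt (map (\<lambda>i. n + pp mu i) [0..<n]) j = card {i. i < n \<and> j < n + pp mu i}"
    by (simp add: cnt_def length_filter_conv_card) (rule arg_cong[where f=card], auto)
  have B: "cnt (conj_part mu) j = pp mu j" by (rule cnt_conj[OF P])
  show ?thesis
  proof (cases "j < n")
    case True
    have "{i. i < n \<and> j < n + pp mu i} = {..<n}" using True by auto
    thus ?thesis using True A B by (simp add: build_def cnt_append pp_build[OF P, unfolded build_def])
  next
    case False
    have "{i. i < n \<and> j < n + pp mu i} = {..<cnt mu (j - n)}"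
      using False cnt_le_n[OF L, of "j - n"] L by (auto simp: galois[OF P] pp_def split: if_splits)
    moreover have "pp mu j = 0" using False L by (simp add: pp_def)
    ultimately show ?thesis using False A B by (simp add: build_def cnt_append pp_build[OF P, unfolded build_def])
  qed
qed

lemma build_SC: assumes P: "is_partition mu" and L: "length mu \<le> n"
  shows "build n mu \<in> SC"
  using is_partition_build[OF P L] cnt_build[OF P L] sc_iff
  by (simp add: SC_def self_conjugate_def)

lemma sum_cnt: "\<forall>p\<in>set la. p \<le> N \<Longrightarrow> (\<Sum>j<N. cnt la j) = sum_list la"
proof (induction la)
  case Nil thus ?case by (simp add: cnt_def)
next
  case (Cons a xs)
  have "(\<Sum>j<N. cnt (a # xs) j) = (\<Sum>j<N. (if j < a then 1 else 0) + cnt xs j)"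
    by (rule sum.cong) (auto simp: cnt_Cons)
  also have "\<dots> = card {j. j < N \<and> j < a} + (\<Sum>j<N. cnt xs j)"
    by (simp add: sum.distrib sum.If_cases Int_def)
  also have "{j. j < N \<and> j < a} = {..<a}" using Cons.prems by auto
  finally show ?case using Cons by simp
qed

lemma sum_conj: assumes P: "is_partition mu" shows "sum_list (conj_part mu) = sum_list mu"
proof -
  have "\<forall>p\<in>set mu. p \<le> pp mu 0" using pp_mono[OF P, of 0] P
    by (auto simp: in_set_conv_nth pp_def split: if_splits) (metis le0 pp_def)
  thus ?thesis by (simp add: conj_part_eq interv_sum_list_conv_sum_set_nat atLeast0LessThan sum_cnt)
qed

lemma sum_pp: "length mu \<le> n \<Longrightarrow> (\<Sum>i<n. pp mu i) = sum_list mu"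
proof -
  assume L: "length mu \<le> n"
  have "(\<Sum>i<n. pp mu i) = (\<Sum>i<length mu. pp mu i)"
    by (rule sum.mono_neutral_right) (use L in \<open>auto simp: pp_def\<close>)
  also have "\<dots> = (\<Sum>i<length mu. mu ! i)" by (rule sum.cong) (auto simp: pp_def)
  finally show ?thesis by (simp add: sum_list_sum_nth atLeast0LessThan)
qed

lemma psize_build: assumes P: "is_partition mu" and L: "length mu \<le> n"
  shows "psize (build n mu) = n * n + 2 * psize mu"
proof -
  have "sum_list (map (\<lambda>i. n + pp mu i) [0..<n]) = (\<Sum>i<n. n + pp mu i)"
    by (simp add: interv_sum_list_conv_sum_set_nat atLeast0LessThan)
  also have "\<dots> = n * n + sum_list mu" by (simp add: sum.distrib sum_pp[OF L])
  finally show ?thesis by (simp add: psize_def build_def sum_conj[OF P])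
qed

lemma cnt_Suc: "cnt xs j = cnt xs (Suc j) + length (filter ((=) (Suc j)) xs)"
  by (induction xs) (auto simp: cnt_def)

lemma card_set_conj: assumes P: "is_partition mu"
  shows "card (set (conj_part mu)) = card (set mu)"
proof -
  have C: "is_partition (conj_part mu)" by (rule is_partition_conj[OF P])
  have nthc: "j < pp mu 0 \<Longrightarrow> conj_part mu ! j = cnt mu j" for j by (simp add: conj_part_eq)
  have D: "Dset (conj_part mu) = {j. Suc j \<in> set mu}"
  proof (intro set_eqI iffI)
    fix j assume "j \<in> Dset (conj_part mu)"
    hence "j < pp mu 0" "cnt mu (Suc j) < cnt mu j"
      by (auto simp: Dset_def len_conj pp_conj[OF P] nthc)
    hence "filter ((=) (Suc j)) mu \<noteq> []" using cnt_Suc[of mu j] by auto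
    thus "j \<in> {j. Suc j \<in> set mu}" by (auto simp: filter_empty_conv)
  next
    fix j assume "j \<in> {j. Suc j \<in> set mu}"
    hence m: "Suc j \<in> set mu" by simp
    then obtain k where k: "k < length mu" "mu ! k = Suc j" by (auto simp: in_set_conv_nth)
    have "mu ! k \<le> pp mu 0" using pp_mono[OF P, of 0 k] k by (simp add: pp_def)
    hence j0: "j < pp mu 0" using k by simp
    have "filter ((=) (Suc j)) mu \<noteq> []" using m by (auto simp: filter_empty_conv)
    hence "cnt mu (Suc j) < cnt mu j" using cnt_Suc[of mu j] by simp
    thus "j \<in> Dset (conj_part mu)" using j0
      by (auto simp: Dset_def len_conj pp_conj[OF P] nthc)
  qed
  have pos: "\<forall>p\<in>set mu. 0 < p" using P by (simp add: is_partition_def)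
  have "{j. Suc j \<in> set mu} = (\<lambda>v. v - 1) ` set mu"
  proof (intro set_eqI iffI)
    fix j assume "j \<in> {j. Suc j \<in> set mu}" thus "j \<in> (\<lambda>v. v - 1) ` set mu"
      by (force intro: image_eqI[of _ _ "Suc j"])
  next
    fix j assume "j \<in> (\<lambda>v. v - 1) ` set mu"
    then obtain v where v: "v \<in> set mu" "j = v - 1" by blast
    hence "Suc j = v" using pos by auto
    thus "j \<in> {j. Suc j \<in> set mu}" using v by simp
  qed
  moreover have "inj_on (\<lambda>v. v - 1) (set mu)"
  proof (rule inj_onI)
    fix x y assume "x \<in> set mu" "y \<in> set mu" "x - 1 = y - 1"
    moreover have "0 < x" "0 < y" using pos calculation by auto
    ultimately show "x = y" by linarith
  qed
  ultimately have "card {j. Suc j \<in> set mu} = card (set mu)" by (simp add: card_image)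
  thus ?thesis using card_set_D[OF C] D by simp
qed

lemma card_set_build: assumes P: "is_partition mu" and L: "length mu \<le> n"
  shows "card (set (build n mu)) = 2 * card (set mu) + (if length mu < n then 1 else 0)"
proof -
  let ?A = "set (map (\<lambda>i. n + pp mu i) [0..<n])"
  let ?B = "set (conj_part mu)"
  have pos: "\<forall>p\<in>set mu. 0 < p" using P by (simp add: is_partition_def)
  have I: "pp mu ` {..<n} = set mu \<union> (if length mu < n then {0} else {})"
  proof (intro set_eqI iffI)
    fix v assume "v \<in> pp mu ` {..<n}"
    thus "v \<in> set mu \<union> (if length mu < n then {0} else {})"
      using L by (auto simp: pp_def)
  next
    fix v assume v: "v \<in> set mu \<union> (if length mu < n then {0} else {})"
    show "v \<in> pp mu ` {..<n}"
    proof (cases "v \<in> set mu")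
      case True
      then obtain k where "k < length mu" "mu ! k = v" by (auto simp: in_set_conv_nth)
      thus ?thesis using L by (auto simp: pp_def image_iff intro!: bexI[of _ k])
    next
      case False
      hence "length mu < n" "v = 0" using v by (auto split: if_splits)
      thus ?thesis by (auto simp: pp_def image_iff intro!: bexI[of _ "length mu"])
    qed
  qed
  have "?A = (\<lambda>v. n + v) ` (pp mu ` {..<n})" by auto
  have cA: "card ?A = card (set mu) + (if length mu < n then 1 else 0)"
  proof -
    have z: "0 \<notin> set mu" using pos by auto
    have "card ?A = card (pp mu ` {..<n})" using \<open>?A = _\<close> by (simp add: card_image)
    also have "\<dots> = card (set mu) + (if length mu < n then 1 else 0)"
      unfolding I using z by (cases "length mu < n") auto
    finally show ?thesis .
  qed
  have cB: "card ?B = card (set mu)" by (rule card_set_conj[OF P])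
  have disj: "?A \<inter> ?B = {}"
  proof -
    have "b < a" if a: "a \<in> ?A" and b: "b \<in> ?B" for a b
    proof -
      obtain i where i: "i < n" "a = n + pp mu i" using a by auto
      obtain j where j: "j < pp mu 0" "b = cnt mu j" using b by (auto simp: conj_part_eq)
      have "b \<le> length mu" using j cnt_le_len by simp
      moreover have "0 < pp mu i \<or> length mu < n"
        using i L pp_pos[OF P, of i] by (cases "i < length mu") (auto simp: pp_def)
      ultimately show ?thesis using i L by auto
    qed
    thus ?thesis by fastforce
  qed
  show ?thesis unfolding build_def set_append
    by (subst card_Un_disjoint) (use disj cA cB in auto)
qed



definition dn :: "nat list \<Rightarrow> nat" where "dn la = (LEAST i. pp la i \<le> i)"
definition dmu :: "nat list \<Rightarrow> nat list" where
  "dmu la = map (\<lambda>i. la ! i - dn la) [0..<pp la (dn la)]"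

lemma SC_D: "la \<in> SC \<Longrightarrow> is_partition la \<and> (\<forall>j. cnt la j = pp la j)"
  using sc_iff by (auto simp: SC_def self_conjugate_def)

lemma dn_props: assumes P: "is_partition la"
  shows "pp la (dn la) \<le> dn la" "\<And>i. i < dn la \<Longrightarrow> i < pp la i"
proof -
  have "pp la (length la) \<le> length la" by (simp add: pp_def)
  thus "pp la (dn la) \<le> dn la" unfolding dn_def by (rule LeastI)
  fix i assume "i < dn la"
  thus "i < pp la i" unfolding dn_def using not_less_Least by fastforce
qed

lemma dn_ge: assumes P: "is_partition la" and i: "i < dn la" shows "dn la \<le> pp la i"
proof -
  have "dn la - 1 < pp la (dn la - 1)" using dn_props(2)[OF P] i by simp
  moreover have "pp la (dn la - 1) \<le> pp la i" using pp_mono[OF P] i by simp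
  ultimately show ?thesis using i by linarith
qed

lemma dn_pos: "is_partition la \<Longrightarrow> la \<noteq> [] \<Longrightarrow> 0 < dn la"
  using dn_props(1)[of la] pp_pos[of la 0] by (cases "dn la") auto

lemma decomp: assumes T: "la \<in> SC"
  shows "is_partition (dmu la)" "length (dmu la) \<le> dn la" "build (dn la) (dmu la) = la"
proof -
  have P: "is_partition la" and S: "\<And>j. cnt la j = pp la j" using SC_D[OF T] by auto
  define n where "n = dn la"
  define k where "k = pp la n"
  have kn: "k \<le> n" using dn_props(1)[OF P] by (simp add: k_def n_def)
  have big: "i < k \<Longrightarrow> n < pp la i" for i using galois[OF P, of i n] S[of n] by (simp add: k_def)
  have small: "k \<le> i \<Longrightarrow> pp la i \<le> n" for i using galois[OF P, of i n] S[of n] by (simp add: k_def)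
  have mu: "dmu la = map (\<lambda>i. la ! i - n) [0..<k]" by (simp add: dmu_def n_def k_def)
  have ppmu: "pp (dmu la) i = (if i < n then pp la i - n else 0)" for i
  proof (cases "i < k")
    case True
    hence "i < length la" using big[OF True] by (auto simp: pp_def split: if_splits)
    thus ?thesis using True kn by (simp add: mu pp_def)
  next
    case False thus ?thesis using small[of i] by (auto simp: mu pp_def)
  qed
  show L: "length (dmu la) \<le> dn la" using kn by (simp add: mu n_def)
  show MP: "is_partition (dmu la)"
  proof -
    have "sorted_wrt (\<ge>) (map (\<lambda>i. la ! i - n) [0..<k])"
    proof -
      have "la ! j \<le> la ! i" if "i < j" "j < k" for i j
      proof -
        have "j < length la" using big[OF \<open>j < k\<close>] by (auto simp: pp_def split: if_splits)
        thus ?thesis using nth_anti[OF P, of i j] that by simp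
      qed
      thus ?thesis by (auto simp: sorted_wrt_iff_nth_less intro: diff_le_mono)
    qed
    moreover have "\<forall>p\<in>set (map (\<lambda>i. la ! i - n) [0..<k]). 0 < p"
    proof
      fix p assume "p \<in> set (map (\<lambda>i. la ! i - n) [0..<k])"
      then obtain i where "i < k" "p = la ! i - n" by auto
      thus "0 < p" using big[of i] by (auto simp: pp_def split: if_splits)
    qed
    ultimately show ?thesis by (simp add: is_partition_def mu)
  qed
  show "build (dn la) (dmu la) = la"
  proof (rule part_eq[OF is_partition_build[OF MP L] P])
    fix i
    show "pp (build (dn la) (dmu la)) i = pp la i"
    proof (cases "i < n")
      case True
      thus ?thesis using dn_ge[OF P, of i] by (simp add: pp_build[OF MP] ppmu n_def)
    next
      case False
      have "cnt (dmu la) (i - n) = cnt la i"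
      proof (rule eq_from_less)
        fix x
        have A: "x < cnt (dmu la) (i - n) \<longleftrightarrow> x < n \<and> i < pp la x"
          using galois[OF MP, of x "i - n"] False by (auto simp: ppmu)
        have B: "n \<le> x \<Longrightarrow> pp la x \<le> n"
          using pp_mono[OF P, of n x] dn_props(1)[OF P] by (simp add: n_def)
        show "x < cnt (dmu la) (i - n) \<longleftrightarrow> x < cnt la i"
          using A B False galois[OF P, of x i] by (metis le_trans not_less)
      qed
      thus ?thesis using False S[of i] by (simp add: pp_build[OF MP] n_def)
    qed
  qed
qed

lemma dn_build: assumes P: "is_partition mu" and L: "length mu \<le> n"
  shows "dn (build n mu) = n"
  unfolding dn_def
proof (rule Least_equality)
  show "pp (build n mu) n \<le> n" using L by (simp add: pp_build[OF P] cnt0[OF P])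
  fix y assume "pp (build n mu) y \<le> y"
  thus "n \<le> y" by (cases "y < n") (auto simp: pp_build[OF P])
qed

lemma dmu_build: assumes P: "is_partition mu" and L: "length mu \<le> n"
  shows "dmu (build n mu) = mu"
proof -
  have k: "pp (build n mu) n = length mu" using L by (simp add: pp_build[OF P] cnt0[OF P])
  show ?thesis unfolding dmu_def dn_build[OF P L] k
  proof (rule nth_equalityI)
    show "length (map (\<lambda>i. build n mu ! i - n) [0..<length mu]) = length mu" by simp
  next
    fix i assume "i < length (map (\<lambda>i. build n mu ! i - n) [0..<length mu])"
    hence i: "i < length mu" by simp
    hence "build n mu ! i = n + mu ! i" using L by (simp add: build_def nth_append pp_def)
    thus "map (\<lambda>i. build n mu ! i - n) [0..<length mu] ! i = mu ! i" using i by simp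
  qed
qed

definition Spairs :: "nat \<Rightarrow> (nat \<times> nat list) set" where
  "Spairs m = {(n, mu). 1 \<le> n \<and> is_partition mu \<and> length mu \<le> n \<and> n * n + 2 * sum_list mu = m}"

lemma SC_sum_pairs: assumes m: "1 \<le> m"
  shows "(\<Sum>la\<in>{la\<in>SC. psize la = m}. f (n1 la)) =
         (\<Sum>(n, mu)\<in>Spairs m. f (2 * card (set mu) + (if length mu < n then 1 else 0)))"
proof (rule sym, rule sum.reindex_bij_witness[where i = "\<lambda>la. (dn la, dmu la)" and j = "\<lambda>(n, mu). build n mu"])
  fix a assume a: "a \<in> Spairs m"
  then obtain n mu where e: "a = (n, mu)" and P: "is_partition mu" and L: "length mu \<le> n"
    and n: "1 \<le> n" and s: "n * n + 2 * sum_list mu = m" by (auto simp: Spairs_def)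
  show "(\<lambda>la. (dn la, dmu la)) ((\<lambda>(n, mu). build n mu) a) = a"
    using e dn_build[OF P L] dmu_build[OF P L] by simp
  show "(\<lambda>(n, mu). build n mu) a \<in> {la \<in> SC. psize la = m}"
    using e build_SC[OF P L] psize_build[OF P L] s by (simp add: psize_def)
  show "f (n1 ((\<lambda>(n, mu). build n mu) a)) = (case a of (n, mu) \<Rightarrow> f (2 * card (set mu) + (if length mu < n then 1 else 0)))"
    using e n1_card_set[OF is_partition_build[OF P L]] card_set_build[OF P L] by simp
next
  fix b assume b: "b \<in> {la \<in> SC. psize la = m}"
  hence T: "b \<in> SC" and s: "psize b = m" by auto
  have P: "is_partition b" using SC_D[OF T] by auto
  have ne: "b \<noteq> []" using s m by (auto simp: psize_def)
  show "(\<lambda>(n, mu). build n mu) (dn b, dmu b) = b" using decomp[OF T] by simp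
  have "psize b = dn b * dn b + 2 * psize (dmu b)"
    using psize_build[OF decomp(1,2)[OF T]] decomp(3)[OF T] by simp
  thus "(dn b, dmu b) \<in> Spairs m" using decomp(1,2)[OF T] dn_pos[OF P ne] s
    by (auto simp: Spairs_def psize_def)
qed



definition P2 :: "nat \<Rightarrow> nat \<Rightarrow> nat list set" where
  "P2 n m = {mu. is_partition mu \<and> length mu \<le> n \<and> 2 * sum_list mu = m}"

definition wt :: "nat list \<Rightarrow> int poly" where
  "wt mu = monom 1 (2 * card (set mu))"

definition Cf :: "nat \<Rightarrow> int poly fps" where
  "Cf n = Abs_fps (\<lambda>m. \<Sum>mu\<in>P2 n m. wt mu)"

lemma sum_list_ge_len: "\<forall>p\<in>set xs. 0 < p \<Longrightarrow> length xs \<le> sum_list (xs::nat list)"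
  by (induction xs) auto

lemma elem_le_sum: "p \<in> set xs \<Longrightarrow> p \<le> sum_list (xs::nat list)"
  by (induction xs) auto

lemma finite_P2: "finite (P2 n m)"
proof (rule finite_subset)
  show "P2 n m \<subseteq> {xs. set xs \<subseteq> {0..m} \<and> length xs \<le> m}"
  proof
    fix mu assume "mu \<in> P2 n m"
    hence P: "is_partition mu" and s: "2 * sum_list mu = m" by (auto simp: P2_def)
    have "length mu \<le> sum_list mu" using P by (intro sum_list_ge_len) (simp add: is_partition_def)
    moreover have "set mu \<subseteq> {0..m}" using elem_le_sum[of _ mu] s by fastforce
    ultimately show "mu \<in> {xs. set xs \<subseteq> {0..m} \<and> length xs \<le> m}" using s by auto
  qed
  show "finite {xs. set xs \<subseteq> {0..m} \<and> length xs \<le> m}"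
    by (rule finite_lists_length_le) simp
qed

definition inc :: "nat \<Rightarrow> nat list \<Rightarrow> nat list" where
  "inc N nu = map Suc nu @ replicate (N - length nu) 1"

definition dec :: "nat list \<Rightarrow> nat list" where
  "dec mu = map (\<lambda>p. p - 1) (takeWhile (\<lambda>p. 1 < p) mu)"

lemma inc_dec: "sorted_wrt (\<ge>) xs \<Longrightarrow> \<forall>p\<in>set xs. 0 < p \<Longrightarrow> inc (length xs) (dec xs) = xs"
proof (induction xs)
  case Nil thus ?case by (simp add: inc_def dec_def)
next
  case (Cons a xs)
  show ?case
  proof (cases "1 < a")
    case True
    have "inc (length xs) (dec xs) = xs" using Cons by simp
    thus ?thesis using True by (simp add: inc_def dec_def)
  next
    case False
    hence a: "a = 1" using Cons.prems by auto
    have "\<forall>y\<in>set xs. y = 1" using Cons.prems a by fastforce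
    hence "replicate (length xs) 1 = xs" by (rule replicate_length_same)
    thus ?thesis using a by (simp add: inc_def dec_def)
  qed
qed

lemma dec_inc: "\<forall>p\<in>set nu. 0 < p \<Longrightarrow> dec (inc N nu) = nu"
proof -
  assume pos: "\<forall>p\<in>set nu. 0 < p"
  have "takeWhile (\<lambda>p. 1 < p) (map Suc nu @ replicate (N - length nu) 1) = map Suc nu @ takeWhile (\<lambda>p. 1 < p) (replicate (N - length nu) 1)"
    by (rule takeWhile_append2) (use pos in auto)
  moreover have "takeWhile (\<lambda>p. 1 < p) (replicate k (1::nat)) = []" for k by (cases k) auto
  ultimately show ?thesis by (simp add: dec_def inc_def comp_def)
qed

lemma sorted_rep: "sorted_wrt (\<ge>) (replicate k (x::nat))" by (induction k) auto

lemma inc_props: assumes P: "is_partition nu" and L: "length nu \<le> N"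
  shows "is_partition (inc N nu)" "length (inc N nu) = N" "sum_list (inc N nu) = sum_list nu + N"
    "card (set (inc N nu)) = card (set nu) + (if length nu < N then 1 else 0)"
proof -
  have pos: "\<forall>p\<in>set nu. 0 < p" and so: "sorted_wrt (\<ge>) nu" using P by (auto simp: is_partition_def)
  show "is_partition (inc N nu)" unfolding is_partition_def inc_def
    using so pos by (auto simp: sorted_wrt_append sorted_wrt_map sorted_rep)
  show "length (inc N nu) = N" using L by (simp add: inc_def)
  have "sum_list (map Suc nu) = sum_list nu + length nu" by (induction nu) auto
  thus "sum_list (inc N nu) = sum_list nu + N" using L by (simp add: inc_def sum_list_replicate)
  have s: "set (inc N nu) = Suc ` set nu \<union> (if length nu < N then {1} else {})" using L
    by (auto simp: inc_def)
  have "1 \<notin> Suc ` set nu" using pos by auto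
  thus "card (set (inc N nu)) = card (set nu) + (if length nu < N then 1 else 0)"
    unfolding s by (auto simp: card_image)
qed

lemma dec_props: assumes P: "is_partition mu"
  shows "is_partition (dec mu)" "length (dec mu) \<le> length mu"
proof -
  have so: "sorted_wrt (\<ge>) (takeWhile (\<lambda>p. 1 < p) mu)"
    using P by (auto simp: is_partition_def intro: sorted_wrt_takeWhile)
  have "\<forall>p\<in>set (takeWhile (\<lambda>p. 1 < p) mu). 1 < p" by (auto dest: set_takeWhileD)
  moreover have "sorted_wrt (\<lambda>x y. y - 1 \<le> x - 1) (takeWhile (\<lambda>p. 1 < p) mu)"
    by (rule sorted_wrt_mono_rel[OF _ so]) auto
  ultimately show "is_partition (dec mu)" unfolding is_partition_def dec_def
    by (auto simp: sorted_wrt_map)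
  show "length (dec mu) \<le> length mu" by (simp add: dec_def length_takeWhile_le)
qed

lemma px_sq: "px ^ 2 = (monom 1 2 :: int poly)"
proof -
  have "px = monom 1 1" by (simp add: monom_Suc)
  thus ?thesis by (simp add: power2_eq_square mult_monom numeral_2_eq_2)
qed

lemma wt_step: "monom (1::int) (2 * (c + 1)) = px ^ 2 * monom 1 (2 * c)"
  by (simp add: px_sq mult_monom)

lemma E_sum: assumes N: "N = Suc n"
  shows "(\<Sum>mu\<in>{mu\<in>P2 N m. length mu = N}. wt mu) =
    (if m < 2 * N then 0 else
       (\<Sum>nu\<in>P2 N (m - 2 * N). wt nu) + (px ^ 2 - 1) * (\<Sum>nu\<in>P2 n (m - 2 * N). wt nu))"
proof (cases "m < 2 * N")
  case True
  have "{mu\<in>P2 N m. length mu = N} = {}"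
  proof (rule ccontr)
    assume "{mu\<in>P2 N m. length mu = N} \<noteq> {}"
    then obtain mu where "mu \<in> P2 N m" "length mu = N" by auto
    hence "N \<le> sum_list mu" "2 * sum_list mu = m"
      using sum_list_ge_len[of mu] by (auto simp: P2_def is_partition_def)
    thus False using True by linarith
  qed
  thus ?thesis using True by (simp only:) simp
next
  case False
  define m' where "m' = m - 2 * N"
  have "(\<Sum>mu\<in>{mu\<in>P2 N m. length mu = N}. wt mu) = (\<Sum>nu\<in>P2 N m'. monom 1 (2 * (card (set nu) + (if length nu < N then 1 else 0))))"
  proof (rule sym, rule sum.reindex_bij_witness[where j = "inc N" and i = dec])
    fix a assume a: "a \<in> P2 N m'"
    hence P: "is_partition a" and L: "length a \<le> N" and s: "2 * sum_list a = m'" by (auto simp: P2_def)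
    show "dec (inc N a) = a" using P by (intro dec_inc) (simp add: is_partition_def)
    show "inc N a \<in> {mu \<in> P2 N m. length mu = N}"
      using inc_props[OF P L] s False by (auto simp: P2_def m'_def)
    show "wt (inc N a) = monom 1 (2 * (card (set a) + (if length a < N then 1 else 0)))"
      using inc_props(4)[OF P L] by (simp add: wt_def)
  next
    fix b assume b: "b \<in> {mu \<in> P2 N m. length mu = N}"
    hence P: "is_partition b" and L: "length b = N" and s: "2 * sum_list b = m" by (auto simp: P2_def)
    have e: "inc N (dec b) = b" using inc_dec[of b] P L by (simp add: is_partition_def)
    show "inc N (dec b) = b" by (rule e)
    have "sum_list b = sum_list (dec b) + N"
      using inc_props(3)[OF dec_props(1)[OF P], of N] dec_props(2)[OF P] L e by simp
    thus "dec b \<in> P2 N m'" using dec_props[OF P] L s by (auto simp: P2_def m'_def)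
  qed
  also have "\<dots> = (\<Sum>nu\<in>P2 N m'. wt nu + (if length nu < N then (px ^ 2 - 1) * wt nu else 0))"
    by (rule sum.cong) (auto simp: wt_def px_sq mult_monom algebra_simps)
  also have "\<dots> = (\<Sum>nu\<in>P2 N m'. wt nu) + (px ^ 2 - 1) * (\<Sum>nu\<in>{nu\<in>P2 N m'. length nu < N}. wt nu)"
    by (simp add: sum.distrib sum.If_cases finite_P2 sum_distrib_left Int_def)
  also have "{nu\<in>P2 N m'. length nu < N} = P2 n m'" using N by (auto simp: P2_def)
  finally show ?thesis using False by (simp add: m'_def)
qed

lemma P2_split: assumes N: "N = Suc n"
  shows "(\<Sum>mu\<in>P2 N m. wt mu) = (\<Sum>mu\<in>P2 n m. wt mu) + (\<Sum>mu\<in>{mu\<in>P2 N m. length mu = N}. wt mu)"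
proof -
  have "P2 N m = P2 n m \<union> {mu\<in>P2 N m. length mu = N}" using N by (auto simp: P2_def)
  moreover have "P2 n m \<inter> {mu\<in>P2 N m. length mu = N} = {}" using N by (auto simp: P2_def)
  ultimately show ?thesis by (metis (no_types, lifting) sum.union_disjoint finite_P2 finite_Un)
qed

lemma Cf_rec: "Cf (Suc n) = Cf n + fps_X ^ (2 * Suc n) * (Cf (Suc n) - fps_const (1 - px ^ 2) * Cf n)"
proof (rule fps_ext)
  fix m
  show "fps_nth (Cf (Suc n)) m = fps_nth (Cf n + fps_X ^ (2 * Suc n) * (Cf (Suc n) - fps_const (1 - px ^ 2) * Cf n)) m"
    unfolding fps_add_nth fps_X_power_mult_nth fps_sub_nth fps_mult_left_const_nth Cf_def fps_nth_Abs_fps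
    unfolding P2_split[OF refl, of n m] E_sum[OF refl, of n m]
    by (simp add: algebra_simps)
qed

lemma Cf0: "Cf 0 = 1"
proof (rule fps_ext)
  fix m
  have "P2 0 m = (if m = 0 then {[]} else {})" by (auto simp: P2_def is_partition_def)
  thus "fps_nth (Cf 0) m = fps_nth 1 m" by (simp add: Cf_def wt_def)
qed

abbreviation "Dq n \<equiv> qpoch (fps_X\<^sup>2 :: int poly fps) (fps_X\<^sup>2) n"
abbreviation "Pq n \<equiv> qpoch (fps_const (1 - px\<^sup>2) * fps_X\<^sup>2 :: int poly fps) (fps_X\<^sup>2) n"

lemma qpoch_Suc: "qpoch a b (Suc n) = qpoch a b n * (1 - a * b ^ n)"
  by (simp add: qpoch_def)

lemma X2pow: "(fps_X\<^sup>2 :: 'a::comm_ring_1 fps) * (fps_X\<^sup>2) ^ n = fps_X ^ (2 * Suc n)"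
  by (simp add: power_mult[symmetric] power_add[symmetric])

lemma rec_lem: "(a::'a::comm_ring_1) = b + y * (a - c * b) \<Longrightarrow> (1 - y) * a = (1 - c * y) * b"
proof -
  assume h: "a = b + y * (a - c * b)"
  have "(1 - y) * a - (1 - c * y) * b = a - (b + y * (a - c * b))" by (simp add: algebra_simps)
  thus ?thesis using h by simp
qed

lemma Cf_closed: "Dq n * Cf n = Pq n"
proof (induction n)
  case 0 thus ?case by (simp add: qpoch_def Cf0)
next
  case (Suc n)
  let ?Y = "fps_X ^ (2 * Suc n) :: int poly fps"
  let ?c = "fps_const (1 - px ^ 2)"
  have R: "(1 - ?Y) * Cf (Suc n) = (1 - ?c * ?Y) * Cf n"
    by (rule rec_lem) (rule Cf_rec)
  have "Dq (Suc n) * Cf (Suc n) = Dq n * ((1 - ?Y) * Cf (Suc n))"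
    by (simp only: qpoch_Suc X2pow mult.assoc)
  also have "\<dots> = Dq n * ((1 - ?c * ?Y) * Cf n)" by (simp only: R)
  also have "\<dots> = (Dq n * Cf n) * (1 - ?c * ?Y)" by (simp only: mult_ac)
  also have "\<dots> = Pq (Suc n)" by (simp only: Suc qpoch_Suc mult.assoc X2pow)
  finally show ?case .
qed



lemma Dq0: "fps_nth (Dq n) 0 = 1"
  by (induction n) (simp_all add: qpoch_def X2pow[symmetric])

lemma div1_eq: assumes D0: "fps_nth D 0 = 1" and H: "D * H = c * N"
  shows "c * fps_div1 N D = (H :: 'a::comm_ring_1 fps)"
proof -
  let ?L = "fps_left_inverse D 1"
  have L: "?L * D = 1" by (rule fps_left_inverse) (simp add: D0)
  have "c * fps_div1 N D = ?L * (c * N)" by (simp add: fps_div1_def mult_ac)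
  also have "\<dots> = (?L * D) * H" using H by (simp add: mult.assoc)
  finally show ?thesis using L by simp
qed

definition Gf :: "nat \<Rightarrow> int poly fps" where
  "Gf n = Cf (Suc n) + fps_const (px - 1) * Cf n"

lemma term_eq: "fps_const px * rhs_term (Suc n) = fps_X ^ ((Suc n)\<^sup>2) * Gf n"
proof -
  let ?Y = "fps_X ^ (2 * Suc n) :: int poly fps"
  let ?x = "fps_const px :: int poly fps"
  have c1: "fps_const (1 - px\<^sup>2) = 1 - ?x ^ 2"
    by (metis fps_const_1_eq_1 fps_const_sub fps_const_power)
  have c2: "fps_const (px - 1) = ?x - 1" by (metis fps_const_1_eq_1 fps_const_sub)
  have c3: "fps_const (1 - px) = 1 - ?x" by (metis fps_const_1_eq_1 fps_const_sub)
  have D: "Dq (Suc n) = Dq n * (1 - ?Y)" by (simp only: qpoch_Suc X2pow)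
  have P: "Pq (Suc n) = Pq n * (1 - fps_const (1 - px\<^sup>2) * ?Y)"
    by (simp only: qpoch_Suc X2pow mult.assoc)
  have e1: "Dq (Suc n) * Cf (Suc n) = Pq n * (1 - (1 - ?x ^ 2) * ?Y)"
    using Cf_closed[of "Suc n"] P c1 by simp
  have e2: "Dq (Suc n) * Cf n = (1 - ?Y) * Pq n"
    using Cf_closed[of n] D by (simp add: mult_ac)
  have "Dq (Suc n) * (fps_X ^ ((Suc n)\<^sup>2) * Gf n) =
        fps_X ^ ((Suc n)\<^sup>2) * (Dq (Suc n) * Cf (Suc n) + (?x - 1) * (Dq (Suc n) * Cf n))"
    by (simp add: Gf_def c2 algebra_simps)
  also have "\<dots> = fps_X ^ ((Suc n)\<^sup>2) * (Pq n * (1 - (1 - ?x ^ 2) * ?Y) + (?x - 1) * ((1 - ?Y) * Pq n))"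
    by (simp only: e1 e2)
  also have "\<dots> = ?x * (fps_X ^ ((Suc n)\<^sup>2) * (1 - (1 - ?x) * ?Y) * Pq n)"
    by (simp add: algebra_simps power2_eq_square)
  finally have H: "Dq (Suc n) * (fps_X ^ ((Suc n)\<^sup>2) * Gf n) =
      ?x * (fps_X ^ ((Suc n)\<^sup>2) * (1 - fps_const (1 - px) * ?Y) * Pq n)" by (simp only: c3)
  show ?thesis unfolding rhs_term_def
    by (rule div1_eq[OF Dq0]) (use H in simp)
qed

lemma rhs_term_vanish: "k < n\<^sup>2 \<Longrightarrow> fps_nth (rhs_term n) k = 0"
  unfolding rhs_term_def fps_div1_def by (simp add: mult.assoc fps_X_power_mult_nth)

lemma fps_sums_lemma:
  fixes f :: "nat \<Rightarrow> 'a::comm_ring_1 fps"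
  assumes Z: "\<And>n k. k \<le> n \<Longrightarrow> fps_nth (f n) k = 0"
  shows "f sums Abs_fps (\<lambda>k. \<Sum>n<k. fps_nth (f n) k)"
  unfolding sums_def
proof (rule tendsto_fpsI)
  fix k
  show "eventually (\<lambda>N. fps_nth (\<Sum>n<N. f n) k = fps_nth (Abs_fps (\<lambda>k. \<Sum>n<k. fps_nth (f n) k)) k) sequentially"
  proof (rule eventually_sequentiallyI[of k])
    fix N assume N: "k \<le> N"
    have "(\<Sum>n<N. fps_nth (f n) k) = (\<Sum>n<k. fps_nth (f n) k)"
      by (rule sum.mono_neutral_right) (use N Z in auto)
    thus "fps_nth (\<Sum>n<N. f n) k = fps_nth (Abs_fps (\<lambda>k. \<Sum>n<k. fps_nth (f n) k)) k"
      by (simp add: fps_sum_nth)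
  qed
qed

lemma rhs_sums: "(\<lambda>n. rhs_term (Suc n)) sums Abs_fps (\<lambda>k. \<Sum>n<k. fps_nth (rhs_term (Suc n)) k)"
proof (rule fps_sums_lemma)
  fix n k :: nat assume "k \<le> n"
  hence "k < (Suc n)\<^sup>2" by (simp add: power2_eq_square)
  thus "fps_nth (rhs_term (Suc n)) k = 0" by (rule rhs_term_vanish)
qed



lemma inner: "(\<Sum>mu\<in>P2 (Suc n) r. monom 1 (2 * card (set mu) + (if length mu < Suc n then 1 else 0)))
   = fps_nth (Gf n) r"
proof -
  have px1: "px = monom 1 1" by (simp add: monom_Suc)
  have "(\<Sum>mu\<in>P2 (Suc n) r. monom 1 (2 * card (set mu) + (if length mu < Suc n then 1 else 0)))
      = (\<Sum>mu\<in>P2 (Suc n) r. wt mu + (if length mu < Suc n then (px - 1) * wt mu else 0))"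
    by (rule sum.cong) (auto simp: wt_def px1 mult_monom algebra_simps)
  also have "\<dots> = (\<Sum>mu\<in>P2 (Suc n) r. wt mu) + (px - 1) * (\<Sum>mu\<in>{mu\<in>P2 (Suc n) r. length mu < Suc n}. wt mu)"
    by (simp add: sum.distrib sum.If_cases finite_P2 sum_distrib_left Int_def)
  also have "{mu\<in>P2 (Suc n) r. length mu < Suc n} = P2 n r" by (auto simp: P2_def)
  finally show ?thesis by (simp add: Gf_def Cf_def)
qed

lemma Spairs_eq: assumes k: "1 \<le> k"
  shows "Spairs k = (\<lambda>(n, mu). (Suc n, mu)) ` (SIGMA n:{n\<in>{..<k}. Suc n * Suc n \<le> k}. P2 (Suc n) (k - Suc n * Suc n))"
proof (intro set_eqI iffI)
  fix x assume "x \<in> Spairs k"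
  then obtain n mu where x: "x = (n, mu)" "1 \<le> n" "is_partition mu" "length mu \<le> n"
    "n * n + 2 * sum_list mu = k" by (auto simp: Spairs_def)
  obtain n' where n': "n = Suc n'" using x(2) by (cases n) auto
  have "n \<le> n * n" by simp
  hence "n' < k" using x(5) n' by linarith
  hence "(n', mu) \<in> (SIGMA n:{n\<in>{..<k}. Suc n * Suc n \<le> k}. P2 (Suc n) (k - Suc n * Suc n))"
    using x n' by (auto simp: P2_def)
  thus "x \<in> (\<lambda>(n, mu). (Suc n, mu)) ` (SIGMA n:{n\<in>{..<k}. Suc n * Suc n \<le> k}. P2 (Suc n) (k - Suc n * Suc n))"
    using x n' by force
next
  fix x assume "x \<in> (\<lambda>(n, mu). (Suc n, mu)) ` (SIGMA n:{n\<in>{..<k}. Suc n * Suc n \<le> k}. P2 (Suc n) (k - Suc n * Suc n))"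
  thus "x \<in> Spairs k" by (auto simp: Spairs_def P2_def)
qed

lemma SC0: "{la\<in>SC. psize la = 0} = {[]}"
proof -
  have "[] \<in> SC" by (simp add: SC_def self_conjugate_def is_partition_def conj_part_def)
  moreover have "la \<in> SC \<Longrightarrow> psize la = 0 \<Longrightarrow> la = []" for la
    by (cases la) (auto simp: SC_def self_conjugate_def is_partition_def psize_def)
  ultimately show ?thesis by (auto simp: psize_def)
qed

theorem mainTheorem8:
  shows "summable (\<lambda>n. rhs_term (Suc n)) \<and>
         SC_gf = 1 + fps_const px * (\<Sum>n. rhs_term (Suc n))"
proof
  show "summable (\<lambda>n. rhs_term (Suc n))" using rhs_sums by (rule sums_summable)
  have s: "(\<Sum>n. rhs_term (Suc n)) = Abs_fps (\<lambda>k. \<Sum>n<k. fps_nth (rhs_term (Suc n)) k)"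
    using rhs_sums by (rule sums_unique[symmetric])
  show "SC_gf = 1 + fps_const px * (\<Sum>n. rhs_term (Suc n))"
  proof (rule fps_ext)
    fix k
    show "fps_nth SC_gf k = fps_nth (1 + fps_const px * (\<Sum>n. rhs_term (Suc n))) k"
    proof (cases "k = 0")
      case True
      thus ?thesis by (simp add: s SC_gf_def SC0 n1_def cells_def)
    next
      case False
      hence k: "1 \<le> k" by simp
      let ?A = "{n\<in>{..<k}. Suc n * Suc n \<le> k}"
      have inj: "inj_on (\<lambda>(n, mu). (Suc n, mu)) X" for X :: "(nat \<times> nat list) set"
        by (auto simp: inj_on_def)
      have "fps_nth SC_gf k = (\<Sum>la\<in>{la\<in>SC. psize la = k}. monom 1 (n1 la))"
        by (simp add: SC_gf_def)
      also have "\<dots> = (\<Sum>(n, mu)\<in>Spairs k. monom 1 (2 * card (set mu) + (if length mu < n then 1 else 0)))"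
        by (rule SC_sum_pairs[OF k])
      also have "\<dots> = (\<Sum>(n, mu)\<in>(SIGMA n:?A. P2 (Suc n) (k - Suc n * Suc n)).
                         monom 1 (2 * card (set mu) + (if length mu < Suc n then 1 else 0)))"
        unfolding Spairs_eq[OF k] by (subst sum.reindex[OF inj]) (simp add: case_prod_beta comp_def)
      also have "\<dots> = (\<Sum>n\<in>?A. \<Sum>mu\<in>P2 (Suc n) (k - Suc n * Suc n).
                         monom 1 (2 * card (set mu) + (if length mu < Suc n then 1 else 0)))"
        by (rule sum.Sigma[symmetric]) (auto simp: finite_P2)
      also have "\<dots> = (\<Sum>n\<in>?A. fps_nth (Gf n) (k - Suc n * Suc n))"
        by (simp add: inner)
      also have "\<dots> = (\<Sum>n<k. if Suc n * Suc n \<le> k then fps_nth (Gf n) (k - Suc n * Suc n) else 0)"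
        by (rule sum.inter_filter) simp
      also have "\<dots> = (\<Sum>n<k. fps_nth (fps_const px * rhs_term (Suc n)) k)"
        by (rule sum.cong[OF refl]) (simp only: term_eq fps_X_power_mult_nth power2_eq_square, simp add: not_less)
      also have "\<dots> = fps_nth (1 + fps_const px * (\<Sum>n. rhs_term (Suc n))) k"
        using k by (simp add: s sum_distrib_left)
      finally show ?thesis .
    qed
  qed
qed

end
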